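(* Let $X_1,\dots,X_n$ be i.i.d. $\mathsf{Bernoulli}(p)$ with $p\in[\frac12,1)$, $Y_k=X_k\oplus V_k$ with $V_1,\dots,V_n$ i.i.d. $\mathsf{Bernoulli}(\alpha)$ independent of $X^n$, $\alpha\in[0,\frac12)$, $\bar\alpha>p$. Let $q=\alpha\bar p+\bar\alpha p$, $\zeta_n(\varepsilon)=\frac{\bar\alpha^n-\varepsilon^n}{(\bar\alpha p)^n-(\alpha\bar p)^n}$, and for each $n$ let $\varepsilon_{\mathsf L}=\varepsilon_{\mathsf L}^{(n)}\in[p,\bar\alpha)$ be such that $\underline{\mathcal{h}}_n^n(\varepsilon)=1-\zeta_n(\varepsilon)q^n$ for all $\varepsilon\in[\varepsilon_{\mathsf L},\bar\alpha]$ (such a number exists). Let $$\Phi(n)=\frac{q^n\bar\alpha^{n-1}}{(\bar\alpha p)^n-(\alpha\bar p)^n}.$$ If $p>\frac12$ and $\alpha>0$, then for all sufficiently large $n$ and all $\varepsilon\in[\varepsilon_{\mathsf L},\bar\alpha]$, $$\underline{\mathcal{h}}_n(\varepsilon)-\mathcal{h}^{\mathsf i}_n(\varepsilon)\ge(\bar\alpha-\varepsilon)[\Phi(1)-\Phi(n)].$$ If $p=\frac12$, then for every $n\ge1$ and every $\varepsilon\in[\varepsilon_{\mathsf L},\bar\alpha]$, $$\mathcal{h}^{\mathsf i}_n(\varepsilon)\le\underline{\mathcal{h}}_n(\varepsilon)\le\mathcal{h}^{\mathsf i}_n(\varepsilon)+\frac{\alpha}{2\bar\alpha}.$$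
   Context: $\bar a=1-a$; $\oplus$ is addition mod 2. $\mathsf{P}_{\mathsf{c}}(X^n|Z^n)=\sum_{z^n}\max_{x^n}P_{X^nZ^n}(x^n,z^n)$. $\underline{\mathcal{h}}_n(\varepsilon)=\sup\{\mathsf{P}_{\mathsf{c}}^{1/n}(Y^n|Z^n): P_{Z^n|Y^n},\ \mathcal{Z}^n=\{0,1\}^n,\ X^n - Y^n - Z^n,\ \mathsf{P}_{\mathsf{c}}^{1/n}(X^n|Z^n)\le\varepsilon\}$ for $\varepsilon\in[p,\bar\alpha]$. $\mathcal{h}^{\mathsf i}_n(\varepsilon)$ is the same supremum restricted to memoryless filters $P_{Z^n|Y^n}(z^n|y^n)=\prod_{k=1}^n\mathsf{W}(z_k|y_k)$ with a single binary channel $\mathsf{W}$. *)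

theory Defs
  imports Complex_Main
begin

text \<open>Binary sequences of length n are bool lists; True = 1, False = 0; xor is (\<noteq>).\<close>

definition seqs :: "nat \<Rightarrow> bool list set" where
  "seqs n = {xs. length xs = n}"

definition bern :: "real \<Rightarrow> bool \<Rightarrow> real" where
  "bern a b = (if b then a else 1 - a)"

text \<open>Joint pmf of (X^n, Y^n): X_k iid Bernoulli(p), Y_k = X_k xor V_k, V_k iid Bernoulli(alpha).\<close>
definition PXY :: "real \<Rightarrow> real \<Rightarrow> bool list \<Rightarrow> bool list \<Rightarrow> real" where
  "PXY p \<alpha> xs ys = prod_list (map2 (\<lambda>x y. bern p x * bern \<alpha> (x \<noteq> y)) xs ys)"

definition PY :: "nat \<Rightarrow> real \<Rightarrow> real \<Rightarrow> bool list \<Rightarrow> real" where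
  "PY n p \<alpha> ys = (\<Sum>xs\<in>seqs n. PXY p \<alpha> xs ys)"

text \<open>A filter P_{Z^n|Y^n} with Z^n in {0,1}^n (Markov chain X^n - Y^n - Z^n built in).\<close>
definition kernel :: "nat \<Rightarrow> (bool list \<Rightarrow> bool list \<Rightarrow> real) \<Rightarrow> bool" where
  "kernel n K \<longleftrightarrow> (\<forall>y\<in>seqs n. \<forall>z\<in>seqs n. 0 \<le> K y z) \<and> (\<forall>y\<in>seqs n. (\<Sum>z\<in>seqs n. K y z) = 1)"

definition PcX :: "nat \<Rightarrow> real \<Rightarrow> real \<Rightarrow> (bool list \<Rightarrow> bool list \<Rightarrow> real) \<Rightarrow> real" where
  "PcX n p \<alpha> K = (\<Sum>z\<in>seqs n. Max ((\<lambda>x. \<Sum>y\<in>seqs n. PXY p \<alpha> x y * K y z) ` seqs n))"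

definition PcY :: "nat \<Rightarrow> real \<Rightarrow> real \<Rightarrow> (bool list \<Rightarrow> bool list \<Rightarrow> real) \<Rightarrow> real" where
  "PcY n p \<alpha> K = (\<Sum>z\<in>seqs n. Max ((\<lambda>y. PY n p \<alpha> y * K y z) ` seqs n))"

definition hlow :: "nat \<Rightarrow> real \<Rightarrow> real \<Rightarrow> real \<Rightarrow> real" where
  "hlow n p \<alpha> \<epsilon> = Sup {root n (PcY n p \<alpha> K) | K. kernel n K \<and> root n (PcX n p \<alpha> K) \<le> \<epsilon>}"

definition channel :: "(bool \<Rightarrow> bool \<Rightarrow> real) \<Rightarrow> bool" where
  "channel W \<longleftrightarrow> (\<forall>y z. 0 \<le> W y z) \<and> (\<forall>y. W y True + W y False = 1)"

text \<open>Memoryless filter: P(z^n|y^n) = prod_k W(z_k|y_k), W y z = W(z|y).\<close>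
definition memK :: "(bool \<Rightarrow> bool \<Rightarrow> real) \<Rightarrow> bool list \<Rightarrow> bool list \<Rightarrow> real" where
  "memK W ys zs = prod_list (map2 W ys zs)"

definition hind :: "nat \<Rightarrow> real \<Rightarrow> real \<Rightarrow> real \<Rightarrow> real" where
  "hind n p \<alpha> \<epsilon> = Sup {root n (PcY n p \<alpha> (memK W)) | W. channel W \<and> root n (PcX n p \<alpha> (memK W)) \<le> \<epsilon>}"

definition zeta :: "real \<Rightarrow> real \<Rightarrow> nat \<Rightarrow> real \<Rightarrow> real" where
  "zeta p \<alpha> n \<epsilon> = ((1 - \<alpha>) ^ n - \<epsilon> ^ n) / (((1 - \<alpha>) * p) ^ n - (\<alpha> * (1 - p)) ^ n)"

definition qpar :: "real \<Rightarrow> real \<Rightarrow> real" where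
  "qpar p \<alpha> = \<alpha> * (1 - p) + (1 - \<alpha>) * p"

definition Phi :: "real \<Rightarrow> real \<Rightarrow> nat \<Rightarrow> real" where
  "Phi p \<alpha> n = (qpar p \<alpha> ^ n * (1 - \<alpha>) ^ (n - 1)) / (((1 - \<alpha>) * p) ^ n - (\<alpha> * (1 - p)) ^ n)"

end

theory Submission
  imports Defs
begin

lemma seqs_0: "seqs 0 = {[]}" by (auto simp: seqs_def)

lemma seqs_Suc: "seqs (Suc n) = (Cons True ` seqs n) \<union> (Cons False ` seqs n)"
proof
  show "seqs (Suc n) \<subseteq> Cons True ` seqs n \<union> Cons False ` seqs n"
  proof
    fix xs assume "xs \<in> seqs (Suc n)"
    then obtain b ys where "xs = b # ys" "length ys = n" by (auto simp: seqs_def length_Suc_conv)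
    then show "xs \<in> Cons True ` seqs n \<union> Cons False ` seqs n" by (cases b) (auto simp: seqs_def)
  qed
qed (auto simp: seqs_def)

lemma finite_seqs: "finite (seqs n)"
  by (induction n) (auto simp: seqs_0 seqs_Suc)

lemma seqs_ne: "seqs n \<noteq> {}"
proof -
  have "replicate n True \<in> seqs n" by (simp add: seqs_def)
  then show ?thesis by blast
qed

lemma sum_seqs_Suc: "(\<Sum>ys\<in>seqs (Suc n). F ys) = (\<Sum>ys\<in>seqs n. F (True#ys)) + (\<Sum>ys\<in>seqs n. F (False#ys))"
proof -
  have d: "Cons True ` seqs n \<inter> Cons False ` seqs n = {}" by auto
  have "(\<Sum>ys\<in>seqs (Suc n). F ys) = (\<Sum>ys\<in>Cons True ` seqs n. F ys) + (\<Sum>ys\<in>Cons False ` seqs n. F ys)"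
    unfolding seqs_Suc by (rule sum.union_disjoint) (auto simp: finite_seqs)
  also have "\<dots> = (\<Sum>ys\<in>seqs n. F (True#ys)) + (\<Sum>ys\<in>seqs n. F (False#ys))"
    by (simp add: sum.reindex)
  finally show ?thesis .
qed

lemma Max_seqs_Suc: "Max (F ` seqs (Suc n)) = max (Max ((\<lambda>ys. F (True#ys)) ` seqs n)) (Max ((\<lambda>ys. F (False#ys)) ` seqs n))"
  unfolding seqs_Suc image_Un image_image
  by (rule Max_Un) (auto simp: finite_seqs seqs_ne)

lemma Max_cmult:
  fixes c :: real assumes "0 \<le> c"
  shows "Max ((\<lambda>x. c * f x) ` seqs n) = c * Max (f ` seqs n)"
proof -
  have m: "mono (\<lambda>x::real. c * x)" using assms by (auto simp: mono_def mult_left_mono)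
  have "c * Max (f ` seqs n) = Max ((\<lambda>x. c * x) ` (f ` seqs n))"
    by (rule mono_Max_commute[OF m]) (auto simp: finite_seqs seqs_ne)
  then show ?thesis by (simp add: image_image)
qed

lemma Max_prod:
  fixes G :: "bool \<Rightarrow> bool \<Rightarrow> real"
  assumes G: "\<And>a b. 0 \<le> G a b"
  shows "z \<in> seqs n \<Longrightarrow> Max ((\<lambda>x. prod_list (map2 G x z)) ` seqs n) = prod_list (map (\<lambda>z0. max (G True z0) (G False z0)) z)"
proof (induction n arbitrary: z)
  case 0 then show ?case by (simp add: seqs_0 seqs_def)
next
  case (Suc n)
  then obtain z0 z' where z: "z = z0 # z'" "z' \<in> seqs n" by (cases z) (auto simp: seqs_def)
  have nn: "0 \<le> prod_list (map (\<lambda>z0. max (G True z0) (G False z0)) z')"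
    by (rule prod_list_nonneg) (auto intro: max.coboundedI1 G)
  have "Max ((\<lambda>x. prod_list (map2 G x z)) ` seqs (Suc n))
     = max (Max ((\<lambda>ys. G True z0 * prod_list (map2 G ys z')) ` seqs n)) (Max ((\<lambda>ys. G False z0 * prod_list (map2 G ys z')) ` seqs n))"
    unfolding Max_seqs_Suc z by simp
  also have "\<dots> = max (G True z0 * prod_list (map (\<lambda>z0. max (G True z0) (G False z0)) z')) (G False z0 * prod_list (map (\<lambda>z0. max (G True z0) (G False z0)) z'))"
    by (simp add: Max_cmult G Suc.IH z)
  also have "\<dots> = prod_list (map (\<lambda>z0. max (G True z0) (G False z0)) z)"
    using nn by (simp add: z max_mult_distrib_right)
  finally show ?case .
qed

lemma sum_prod: "(\<Sum>z\<in>seqs n. prod_list (map h z)) = ((h True + h False)::real) ^ n"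
proof (induction n)
  case 0 then show ?case by (simp add: seqs_0)
next
  case (Suc n) then show ?case by (simp add: sum_seqs_Suc sum_distrib_left[symmetric] algebra_simps)
qed

lemma sum_prod2: "y \<in> seqs n \<Longrightarrow> (\<Sum>z\<in>seqs n. prod_list (map2 W y z)) = prod_list (map (\<lambda>y0. W y0 True + W y0 False :: real) y)"
proof (induction n arbitrary: y)
  case 0 then show ?case by (simp add: seqs_0 seqs_def)
next
  case (Suc n)
  then obtain y0 y' where y: "y = y0 # y'" "y' \<in> seqs n" by (cases y) (auto simp: seqs_def)
  show ?case by (simp add: y sum_seqs_Suc Suc.IH sum_distrib_left[symmetric] algebra_simps)
qed


definition gX :: "real \<Rightarrow> real \<Rightarrow> (bool \<Rightarrow> bool \<Rightarrow> real) \<Rightarrow> bool \<Rightarrow> bool \<Rightarrow> real" where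
  "gX p \<alpha> W x0 z0 = bern p x0 * bern \<alpha> (x0 \<noteq> True) * W True z0 + bern p x0 * bern \<alpha> (x0 \<noteq> False) * W False z0"
definition py1 :: "real \<Rightarrow> real \<Rightarrow> bool \<Rightarrow> real" where
  "py1 p \<alpha> y0 = bern p True * bern \<alpha> (True \<noteq> y0) + bern p False * bern \<alpha> (False \<noteq> y0)"
definition gY :: "real \<Rightarrow> real \<Rightarrow> (bool \<Rightarrow> bool \<Rightarrow> real) \<Rightarrow> bool \<Rightarrow> bool \<Rightarrow> real" where
  "gY p \<alpha> W y0 z0 = py1 p \<alpha> y0 * W y0 z0"
definition pcx1 where
  "pcx1 p \<alpha> W = max (gX p \<alpha> W True True) (gX p \<alpha> W False True) + max (gX p \<alpha> W True False) (gX p \<alpha> W False False)"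
definition pcy1 where
  "pcy1 p \<alpha> W = max (gY p \<alpha> W True True) (gY p \<alpha> W False True) + max (gY p \<alpha> W True False) (gY p \<alpha> W False False)"

lemma PXY_Cons: "PXY p \<alpha> (x#xs) (y#ys) = bern p x * bern \<alpha> (x \<noteq> y) * PXY p \<alpha> xs ys"
  by (simp add: PXY_def)
lemma memK_Cons: "memK W (y#ys) (z#zs) = W y z * memK W ys zs"
  by (simp add: memK_def)

lemma sumX: "x \<in> seqs n \<Longrightarrow> z \<in> seqs n \<Longrightarrow>
  (\<Sum>y\<in>seqs n. PXY p \<alpha> x y * memK W y z) = prod_list (map2 (gX p \<alpha> W) x z)"
proof (induction n arbitrary: x z)
  case 0 then show ?case by (simp add: seqs_0 seqs_def PXY_def memK_def)
next
  case (Suc n)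
  then obtain x0 x' where x: "x = x0 # x'" "x' \<in> seqs n" by (cases x) (auto simp: seqs_def)
  from Suc obtain z0 z' where z: "z = z0 # z'" "z' \<in> seqs n" by (cases z) (auto simp: seqs_def)
  have "(\<Sum>y\<in>seqs (Suc n). PXY p \<alpha> x y * memK W y z)
    = (bern p x0 * bern \<alpha> (x0 \<noteq> True) * W True z0) * (\<Sum>y\<in>seqs n. PXY p \<alpha> x' y * memK W y z')
    + (bern p x0 * bern \<alpha> (x0 \<noteq> False) * W False z0) * (\<Sum>y\<in>seqs n. PXY p \<alpha> x' y * memK W y z')"
    by (simp add: sum_seqs_Suc x z PXY_Cons memK_Cons sum_distrib_left mult_ac)
  also have "\<dots> = prod_list (map2 (gX p \<alpha> W) x z)"
    unfolding Suc.IH[OF x(2) z(2)] by (simp add: x z gX_def[of p \<alpha> W x0 z0] algebra_simps)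
  finally show ?case .
qed

lemma PY_prod: "y \<in> seqs n \<Longrightarrow> PY n p \<alpha> y = prod_list (map (py1 p \<alpha>) y)"
proof (induction n arbitrary: y)
  case 0 then show ?case by (simp add: seqs_0 seqs_def PXY_def PY_def)
next
  case (Suc n)
  then obtain y0 y' where y: "y = y0 # y'" "y' \<in> seqs n" by (cases y) (auto simp: seqs_def)
  have "PY (Suc n) p \<alpha> y = bern p True * bern \<alpha> (True \<noteq> y0) * PY n p \<alpha> y' + bern p False * bern \<alpha> (False \<noteq> y0) * PY n p \<alpha> y'"
    by (simp add: PY_def sum_seqs_Suc y PXY_Cons sum_distrib_left)
  also have "\<dots> = prod_list (map (py1 p \<alpha>) y)"
    unfolding Suc.IH[OF y(2)] by (simp add: y py1_def algebra_simps)
  finally show ?case .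
qed

lemma prod_combine: "length y = length z \<Longrightarrow>
   prod_list (map f y) * prod_list (map2 W y z) = prod_list (map2 (\<lambda>a b. f a * W a b :: real) y z)"
proof (induction y arbitrary: z)
  case Nil then show ?case by simp
next
  case (Cons a y) then show ?case by (cases z) (auto simp: mult_ac)
qed

lemma bern_nn: "0 \<le> a \<Longrightarrow> a \<le> 1 \<Longrightarrow> 0 \<le> bern a b" by (simp add: bern_def)

lemma PcX_mem:
  assumes "0 \<le> p" "p \<le> 1" "0 \<le> \<alpha>" "\<alpha> \<le> 1" "\<And>a b. 0 \<le> W a b"
  shows "PcX n p \<alpha> (memK W) = pcx1 p \<alpha> W ^ n"
proof -
  have G: "\<And>a b. 0 \<le> gX p \<alpha> W a b" using assms by (simp add: gX_def bern_nn)
  have "PcX n p \<alpha> (memK W) = (\<Sum>z\<in>seqs n. Max ((\<lambda>x. prod_list (map2 (gX p \<alpha> W) x z)) ` seqs n))"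
    unfolding PcX_def by (intro sum.cong refl arg_cong[where f=Max] image_cong sumX)
  also have "\<dots> = (\<Sum>z\<in>seqs n. prod_list (map (\<lambda>z0. max (gX p \<alpha> W True z0) (gX p \<alpha> W False z0)) z))"
    by (intro sum.cong refl Max_prod G)
  also have "\<dots> = pcx1 p \<alpha> W ^ n" by (simp add: sum_prod pcx1_def add_ac)
  finally show ?thesis .
qed

lemma PcY_mem:
  assumes "0 \<le> p" "p \<le> 1" "0 \<le> \<alpha>" "\<alpha> \<le> 1" "\<And>a b. 0 \<le> W a b"
  shows "PcY n p \<alpha> (memK W) = pcy1 p \<alpha> W ^ n"
proof -
  have G: "\<And>a b. 0 \<le> gY p \<alpha> W a b" using assms by (simp add: gY_def py1_def bern_nn)
  have "PcY n p \<alpha> (memK W) = (\<Sum>z\<in>seqs n. Max ((\<lambda>x. prod_list (map2 (gY p \<alpha> W) x z)) ` seqs n))"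
    unfolding PcY_def
  proof (intro sum.cong refl arg_cong[where f=Max] image_cong)
    fix z x assume "z \<in> seqs n" "x \<in> seqs n"
    then show "PY n p \<alpha> x * memK W x z = prod_list (map2 (gY p \<alpha> W) x z)"
      by (simp add: PY_prod memK_def prod_combine seqs_def gY_def)
  qed
  also have "\<dots> = (\<Sum>z\<in>seqs n. prod_list (map (\<lambda>z0. max (gY p \<alpha> W True z0) (gY p \<alpha> W False z0)) z))"
    by (intro sum.cong refl Max_prod G)
  also have "\<dots> = pcy1 p \<alpha> W ^ n" by (simp add: sum_prod pcy1_def add_ac)
  finally show ?thesis .
qed

lemma kernel_mem: "channel W \<Longrightarrow> kernel n (memK W)"
  unfolding kernel_def
proof safe
  assume c: "channel W"
  fix y z assume "y \<in> seqs n" "z \<in> seqs n"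
  show "0 \<le> memK W y z" unfolding memK_def
    using c by (intro prod_list_nonneg) (auto simp: channel_def)
next
  assume c: "channel W"
  fix y assume y: "y \<in> seqs n"
  have "(\<Sum>z\<in>seqs n. memK W y z) = prod_list (map (\<lambda>y0. W y0 True + W y0 False) y)"
    unfolding memK_def by (rule sum_prod2[OF y])
  also have "\<dots> = 1" using c by (induction y) (auto simp: channel_def)
  finally show "(\<Sum>z\<in>seqs n. memK W y z) = 1" .
qed

lemma PcY_le1:
  assumes "0 \<le> p" "p \<le> 1" "0 \<le> \<alpha>" "\<alpha> \<le> 1" "kernel n K"
  shows "PcY n p \<alpha> K \<le> 1"
proof -
  have PYnn: "\<And>y. y \<in> seqs n \<Longrightarrow> 0 \<le> PY n p \<alpha> y"
    using assms by (simp add: PY_prod) (intro prod_list_nonneg, auto simp: py1_def bern_nn)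
  have "PcY n p \<alpha> K \<le> (\<Sum>z\<in>seqs n. \<Sum>y\<in>seqs n. PY n p \<alpha> y * K y z)"
    unfolding PcY_def
  proof (rule sum_mono)
    fix z assume z: "z \<in> seqs n"
    show "Max ((\<lambda>y. PY n p \<alpha> y * K y z) ` seqs n) \<le> (\<Sum>y\<in>seqs n. PY n p \<alpha> y * K y z)"
    proof (subst Max_le_iff, auto simp: finite_seqs seqs_ne)
      fix y assume y: "y \<in> seqs n"
      show "PY n p \<alpha> y * K y z \<le> (\<Sum>y\<in>seqs n. PY n p \<alpha> y * K y z)"
        by (rule member_le_sum[OF y]) (use PYnn assms(5) z in \<open>auto simp: kernel_def finite_seqs\<close>)
    qed
  qed
  also have "\<dots> = (\<Sum>y\<in>seqs n. PY n p \<alpha> y * (\<Sum>z\<in>seqs n. K y z))"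
    by (subst sum.swap) (simp add: sum_distrib_left)
  also have "\<dots> = (\<Sum>y\<in>seqs n. prod_list (map (py1 p \<alpha>) y))"
    using assms(5) by (intro sum.cong refl) (simp add: kernel_def PY_prod)
  also have "\<dots> = 1" by (simp add: sum_prod py1_def bern_def algebra_simps)
  finally show ?thesis .
qed


lemma one_letter:
  assumes hp: "1/2 \<le> p" "p < 1" and ha: "0 \<le> \<alpha>" "\<alpha> < 1/2" and c: "channel W"
  shows "(p - \<alpha>) * (pcy1 p \<alpha> W - 1) \<le> qpar p \<alpha> * (pcx1 p \<alpha> W - (1 - \<alpha>))"
proof -
  define a where "a = W True True"
  define b where "b = W False True"
  have cw: "\<And>y z. 0 \<le> W y z" "\<And>y. W y True + W y False = 1" using c unfolding channel_def by auto
  have a01: "0 \<le> a" "a \<le> 1" using cw[of True] unfolding a_def by (smt (verit))+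
  have b01: "0 \<le> b" "b \<le> 1" using cw[of False] unfolding b_def by (smt (verit))+
  have w1: "W True False = 1 - a" using cw(2)[of True] unfolding a_def by simp
  have w2: "W False False = 1 - b" using cw(2)[of False] unfolding b_def by simp
  define q where "q = qpar p \<alpha>"
  have q: "q = \<alpha> * (1 - p) + (1 - \<alpha>) * p" by (simp add: q_def qpar_def)
  have X1: "gX p \<alpha> W True True = p*(1-\<alpha>)*a + p*\<alpha>*b" by (simp add: gX_def bern_def a_def b_def)
  have X2: "gX p \<alpha> W False True = (1-p)*\<alpha>*a + (1-p)*(1-\<alpha>)*b" by (simp add: gX_def bern_def a_def b_def)
  have X3: "gX p \<alpha> W True False = p*(1-\<alpha>)*(1-a) + p*\<alpha>*(1-b)" by (simp add: gX_def bern_def w1 w2)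
  have X4: "gX p \<alpha> W False False = (1-p)*\<alpha>*(1-a) + (1-p)*(1-\<alpha>)*(1-b)" by (simp add: gX_def bern_def w1 w2)
  have Y1: "gY p \<alpha> W True True = q * a" by (simp add: gY_def py1_def bern_def a_def q algebra_simps)
  have Y2: "gY p \<alpha> W False True = (1 - q) * b" by (simp add: gY_def py1_def bern_def b_def q algebra_simps)
  have Y3: "gY p \<alpha> W True False = q * (1 - a)" by (simp add: gY_def py1_def bern_def w1 q algebra_simps)
  have Y4: "gY p \<alpha> W False False = (1 - q) * (1 - b)" by (simp add: gY_def py1_def bern_def w2 q algebra_simps)
  have X: "pcx1 p \<alpha> W = max (p*(1-\<alpha>)*a + p*\<alpha>*b) ((1-p)*\<alpha>*a + (1-p)*(1-\<alpha>)*b)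
       + max (p*(1-\<alpha>)*(1-a) + p*\<alpha>*(1-b)) ((1-p)*\<alpha>*(1-a) + (1-p)*(1-\<alpha>)*(1-b))"
    by (simp add: pcx1_def X1 X2 X3 X4)
  have Y: "pcy1 p \<alpha> W = max (q * a) ((1 - q) * b) + max (q * (1 - a)) ((1 - q) * (1 - b))"
    by (simp add: pcy1_def Y1 Y2 Y3 Y4)
  have k: "0 \<le> 2*\<alpha>*(1-\<alpha>)*(2*p-1)" using hp ha by simp
  have qpos: "0 \<le> q" using hp ha q by simp
  have q12: "1 - q \<le> q"
  proof -
    have "2*q - 1 = (2*p-1)*(1-2*\<alpha>)" by (simp add: q algebra_simps)
    moreover have "0 \<le> (2*p-1)*(1-2*\<alpha>)" using hp ha by simp
    ultimately show ?thesis by linarith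
  qed
  have XA: "p*(1-\<alpha>)*a + p*\<alpha>*b + ((1-p)*\<alpha>*(1-a) + (1-p)*(1-\<alpha>)*(1-b)) \<le> pcx1 p \<alpha> W"
    unfolding X by (intro add_mono max.cobounded1 max.cobounded2)
  have XD: "(1-p)*\<alpha>*a + (1-p)*(1-\<alpha>)*b + (p*(1-\<alpha>)*(1-a) + p*\<alpha>*(1-b)) \<le> pcx1 p \<alpha> W"
    unfolding X by (intro add_mono max.cobounded1 max.cobounded2)
  have XB: "p*(1-\<alpha>)*a + p*\<alpha>*b + (p*(1-\<alpha>)*(1-a) + p*\<alpha>*(1-b)) \<le> pcx1 p \<alpha> W"
    unfolding X by (intro add_mono max.cobounded1 max.cobounded2)
  have pa: "0 \<le> p - \<alpha>" using hp ha by simp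
  have eA: "q * ((p*(1-\<alpha>)*a + p*\<alpha>*b + ((1-p)*\<alpha>*(1-a) + (1-p)*(1-\<alpha>)*(1-b))) - (1-\<alpha>))
      - (p - \<alpha>) * (q * a + (1 - q) * (1 - b) - 1) = b * (2*\<alpha>*(1-\<alpha>)*(2*p-1))"
    by (simp add: q algebra_simps)
  have eD: "q * (((1-p)*\<alpha>*a + (1-p)*(1-\<alpha>)*b + (p*(1-\<alpha>)*(1-a) + p*\<alpha>*(1-b))) - (1-\<alpha>))
      - (p - \<alpha>) * (q * (1 - a) + (1 - q) * b - 1) = (1 - b) * (2*\<alpha>*(1-\<alpha>)*(2*p-1))"
    by (simp add: q algebra_simps)
  have eB: "q * ((p*(1-\<alpha>)*a + p*\<alpha>*b + (p*(1-\<alpha>)*(1-a) + p*\<alpha>*(1-b))) - (1-\<alpha>))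
      - (p - \<alpha>) * (q - 1) = 2*\<alpha>*(1-\<alpha>)*(2*p-1)"
    by (simp add: q algebra_simps)
  have cA: "(p - \<alpha>) * (q * a + (1 - q) * (1 - b) - 1) \<le> q * (pcx1 p \<alpha> W - (1 - \<alpha>))"
  proof -
    have "0 \<le> b * (2*\<alpha>*(1-\<alpha>)*(2*p-1))" using k b01 by simp
    moreover have "q * ((p*(1-\<alpha>)*a + p*\<alpha>*b + ((1-p)*\<alpha>*(1-a) + (1-p)*(1-\<alpha>)*(1-b))) - (1-\<alpha>)) \<le> q * (pcx1 p \<alpha> W - (1 - \<alpha>))"
      using XA qpos by (intro mult_left_mono) auto
    ultimately show ?thesis using eA by linarith
  qed
  have cD: "(p - \<alpha>) * (q * (1 - a) + (1 - q) * b - 1) \<le> q * (pcx1 p \<alpha> W - (1 - \<alpha>))"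
  proof -
    have "0 \<le> (1 - b) * (2*\<alpha>*(1-\<alpha>)*(2*p-1))" using k b01 by simp
    moreover have "q * (((1-p)*\<alpha>*a + (1-p)*(1-\<alpha>)*b + (p*(1-\<alpha>)*(1-a) + p*\<alpha>*(1-b))) - (1-\<alpha>)) \<le> q * (pcx1 p \<alpha> W - (1 - \<alpha>))"
      using XD qpos by (intro mult_left_mono) auto
    ultimately show ?thesis using eD by linarith
  qed
  have cB: "(p - \<alpha>) * (q - 1) \<le> q * (pcx1 p \<alpha> W - (1 - \<alpha>))"
  proof -
    have "q * ((p*(1-\<alpha>)*a + p*\<alpha>*b + (p*(1-\<alpha>)*(1-a) + p*\<alpha>*(1-b))) - (1-\<alpha>)) \<le> q * (pcx1 p \<alpha> W - (1 - \<alpha>))"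
      using XB qpos by (intro mult_left_mono) auto
    then show ?thesis using eB k by linarith
  qed
  have cC: "(p - \<alpha>) * ((1 - q) - 1) \<le> q * (pcx1 p \<alpha> W - (1 - \<alpha>))"
  proof -
    have "(p - \<alpha>) * ((1 - q) - 1) \<le> (p - \<alpha>) * (q - 1)" using pa q12 by (intro mult_left_mono) auto
    then show ?thesis using cB by linarith
  qed
  have Yc: "pcy1 p \<alpha> W = q * a + (1 - q) * (1 - b) \<or> pcy1 p \<alpha> W = q * (1 - a) + (1 - q) * b
      \<or> pcy1 p \<alpha> W = q \<or> pcy1 p \<alpha> W = 1 - q"
    unfolding Y by (auto simp: max_def algebra_simps)
  show ?thesis
    using Yc cA cB cC cD unfolding q_def by auto
qed




lemma pc_nn:
  assumes "0 \<le> p" "p \<le> 1" "0 \<le> \<alpha>" "\<alpha> \<le> 1" "channel W"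
  shows "0 \<le> pcx1 p \<alpha> W" "0 \<le> pcy1 p \<alpha> W"
proof -
  have W: "\<And>a b. 0 \<le> W a b" using assms(5) by (simp add: channel_def)
  have G: "\<And>a b. 0 \<le> gX p \<alpha> W a b" "\<And>a b. 0 \<le> gY p \<alpha> W a b"
    using assms W by (simp_all add: gX_def gY_def py1_def bern_nn)
  show "0 \<le> pcx1 p \<alpha> W" unfolding pcx1_def by (intro add_nonneg_nonneg max.coboundedI1 G)
  show "0 \<le> pcy1 p \<alpha> W" unfolding pcy1_def by (intro add_nonneg_nonneg max.coboundedI1 G)
qed

lemma roots_mem:
  assumes "0 \<le> p" "p \<le> 1" "0 \<le> \<alpha>" "\<alpha> \<le> 1" "channel W" "0 < n"
  shows "root n (PcX n p \<alpha> (memK W)) = pcx1 p \<alpha> W" "root n (PcY n p \<alpha> (memK W)) = pcy1 p \<alpha> W"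
proof -
  have W: "\<And>a b. 0 \<le> W a b" using assms(5) by (simp add: channel_def)
  show "root n (PcX n p \<alpha> (memK W)) = pcx1 p \<alpha> W"
    using assms W by (simp add: PcX_mem real_root_pos2 pc_nn)
  show "root n (PcY n p \<alpha> (memK W)) = pcy1 p \<alpha> W"
    using assms W by (simp add: PcY_mem real_root_pos2 pc_nn)
qed

lemma bddL:
  assumes "0 \<le> p" "p \<le> 1" "0 \<le> \<alpha>" "\<alpha> \<le> 1" "0 < n"
  shows "bdd_above {root n (PcY n p \<alpha> K) | K. kernel n K \<and> root n (PcX n p \<alpha> K) \<le> \<epsilon>}"
proof (rule bdd_aboveI)
  fix x assume "x \<in> {root n (PcY n p \<alpha> K) | K. kernel n K \<and> root n (PcX n p \<alpha> K) \<le> \<epsilon>}"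
  then obtain K where "kernel n K" "x = root n (PcY n p \<alpha> K)" by blast
  then show "x \<le> 1" using assms PcY_le1[OF assms(1-4)] real_root_le_1_iff[OF assms(5)] by simp
qed

lemma bddI:
  assumes "0 \<le> p" "p \<le> 1" "0 \<le> \<alpha>" "\<alpha> \<le> 1" "0 < n"
  shows "bdd_above {root n (PcY n p \<alpha> (memK W)) | W. channel W \<and> root n (PcX n p \<alpha> (memK W)) \<le> \<epsilon>}"
proof (rule bdd_aboveI)
  fix x assume "x \<in> {root n (PcY n p \<alpha> (memK W)) | W. channel W \<and> root n (PcX n p \<alpha> (memK W)) \<le> \<epsilon>}"
  then obtain W where "channel W" "x = root n (PcY n p \<alpha> (memK W))" by blast
  then show "x \<le> 1" using assms PcY_le1[OF assms(1-4) kernel_mem] real_root_le_1_iff[OF assms(5)] by simp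
qed

lemma hlow_ge:
  assumes "0 \<le> p" "p \<le> 1" "0 \<le> \<alpha>" "\<alpha> \<le> 1" "0 < n" "channel W" "pcx1 p \<alpha> W \<le> \<epsilon>"
  shows "pcy1 p \<alpha> W \<le> hlow n p \<alpha> \<epsilon>"
  unfolding hlow_def
proof (rule cSup_upper[OF _ bddL[OF assms(1-5)]])
  show "pcy1 p \<alpha> W \<in> {root n (PcY n p \<alpha> K) | K. kernel n K \<and> root n (PcX n p \<alpha> K) \<le> \<epsilon>}"
    using assms roots_mem[OF assms(1-4,6,5)] kernel_mem[OF assms(6)]
    by (intro CollectI exI[of _ "memK W"]) auto
qed

lemma hind_ge:
  assumes "0 \<le> p" "p \<le> 1" "0 \<le> \<alpha>" "\<alpha> \<le> 1" "0 < n" "channel W" "pcx1 p \<alpha> W \<le> \<epsilon>"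
  shows "pcy1 p \<alpha> W \<le> hind n p \<alpha> \<epsilon>"
  unfolding hind_def
proof (rule cSup_upper[OF _ bddI[OF assms(1-5)]])
  show "pcy1 p \<alpha> W \<in> {root n (PcY n p \<alpha> (memK W)) | W. channel W \<and> root n (PcX n p \<alpha> (memK W)) \<le> \<epsilon>}"
    using assms roots_mem[OF assms(1-4,6,5)]
    by (intro CollectI exI[of _ W]) auto
qed

lemma ne_if_mem: "x \<in> A \<Longrightarrow> A \<noteq> {}" by blast

lemma hind_le_hlow:
  assumes "0 \<le> p" "p \<le> 1" "0 \<le> \<alpha>" "\<alpha> \<le> 1" "0 < n" "channel W0" "pcx1 p \<alpha> W0 \<le> \<epsilon>"
  shows "hind n p \<alpha> \<epsilon> \<le> hlow n p \<alpha> \<epsilon>"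
  unfolding hind_def hlow_def
proof (rule cSup_subset_mono[OF _ bddL[OF assms(1-5)]])
  show "{root n (PcY n p \<alpha> (memK W)) | W. channel W \<and> root n (PcX n p \<alpha> (memK W)) \<le> \<epsilon>} \<noteq> {}"
  proof -
    have "pcy1 p \<alpha> W0 \<in> {root n (PcY n p \<alpha> (memK W)) | W. channel W \<and> root n (PcX n p \<alpha> (memK W)) \<le> \<epsilon>}"
      using assms roots_mem[OF assms(1-4,6,5)] by (intro CollectI exI[of _ W0]) auto
    then show ?thesis by (rule ne_if_mem)
  qed
  show "{root n (PcY n p \<alpha> (memK W)) | W. channel W \<and> root n (PcX n p \<alpha> (memK W)) \<le> \<epsilon>}
     \<subseteq> {root n (PcY n p \<alpha> K) | K. kernel n K \<and> root n (PcX n p \<alpha> K) \<le> \<epsilon>}"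
  proof
    fix x assume "x \<in> {root n (PcY n p \<alpha> (memK W)) | W. channel W \<and> root n (PcX n p \<alpha> (memK W)) \<le> \<epsilon>}"
    then obtain W where "channel W" "root n (PcX n p \<alpha> (memK W)) \<le> \<epsilon>" "x = root n (PcY n p \<alpha> (memK W))" by blast
    then show "x \<in> {root n (PcY n p \<alpha> K) | K. kernel n K \<and> root n (PcX n p \<alpha> K) \<le> \<epsilon>}"
      using kernel_mem by (intro CollectI exI[of _ "memK W"]) auto
  qed
qed

lemma hind_le_B:
  assumes "0 \<le> p" "p \<le> 1" "0 \<le> \<alpha>" "\<alpha> \<le> 1" "0 < n" "channel W0" "pcx1 p \<alpha> W0 \<le> \<epsilon>"
    and B: "\<And>W. channel W \<Longrightarrow> pcx1 p \<alpha> W \<le> \<epsilon> \<Longrightarrow> pcy1 p \<alpha> W \<le> B"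
  shows "hind n p \<alpha> \<epsilon> \<le> B"
  unfolding hind_def
proof (rule cSup_least)
  show "{root n (PcY n p \<alpha> (memK W)) | W. channel W \<and> root n (PcX n p \<alpha> (memK W)) \<le> \<epsilon>} \<noteq> {}"
  proof -
    have "pcy1 p \<alpha> W0 \<in> {root n (PcY n p \<alpha> (memK W)) | W. channel W \<and> root n (PcX n p \<alpha> (memK W)) \<le> \<epsilon>}"
      using assms roots_mem[OF assms(1-4,6,5)] by (intro CollectI exI[of _ W0]) auto
    then show ?thesis by (rule ne_if_mem)
  qed
  fix x assume "x \<in> {root n (PcY n p \<alpha> (memK W)) | W. channel W \<and> root n (PcX n p \<alpha> (memK W)) \<le> \<epsilon>}"
  then obtain W where "channel W" "root n (PcX n p \<alpha> (memK W)) \<le> \<epsilon>" "x = root n (PcY n p \<alpha> (memK W))" by blast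
  then show "x \<le> B" using B roots_mem[OF assms(1-4) _ assms(5)] by auto
qed

definition Wc :: "bool \<Rightarrow> bool \<Rightarrow> real" where "Wc y z = (if z then 1 else 0)"

lemma Wc1: "channel Wc"
  by (auto simp: channel_def Wc_def)
lemma Wc2: "1/2 \<le> p \<Longrightarrow> pcx1 p \<alpha> Wc = p"
  by (simp add: Wc_def pcx1_def gX_def bern_def max_def algebra_simps)

lemma convex_pow:
  fixes K t :: real assumes "0 \<le> K" "K \<le> 1" "0 \<le> t" "t \<le> 1"
  shows "(1 - K + K*t)^n \<le> 1 - K + K*t^n"
proof (induction n)
  case 0 then show ?case by simp
next
  case (Suc n)
  have nn: "0 \<le> 1 - K + K*t" using assms by (simp add: mult_nonneg_nonneg)
  have "(1 - K + K*t)^Suc n = (1 - K + K*t) * (1 - K + K*t)^n" by simp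
  also have "\<dots> \<le> (1 - K + K*t) * (1 - K + K*t^n)" by (rule mult_left_mono[OF Suc nn])
  also have "\<dots> = 1 - K + K*t^Suc n - (1-K)*K*(1-t)*(1-t^n)" by (simp add: algebra_simps)
  also have "\<dots> \<le> 1 - K + K*t^Suc n"
  proof -
    have "t^n \<le> 1" using assms by (simp add: power_le_one)
    then have "0 \<le> (1-K)*K*(1-t)*(1-t^n)" using assms by simp
    then show ?thesis by linarith
  qed
  finally show ?case .
qed


lemma part1_point:
  fixes p \<alpha> \<epsilon> e0 :: real and n :: nat
  assumes hp: "1/2 < p" "p < 1" and ha: "0 < \<alpha>" "\<alpha> < 1/2" and hpa: "1 - \<alpha> > p"
    and n1: "1 \<le> n" and r1: "(qpar p \<alpha> / p)^n \<le> 1/2" and r2: "(\<alpha>*(1-p) / ((1-\<alpha>)*p))^n \<le> 1/2"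
    and e0: "p \<le> e0" and eps: "e0 \<le> \<epsilon>" "\<epsilon> \<le> 1 - \<alpha>"
    and hl: "hlow n p \<alpha> \<epsilon> ^ n = 1 - zeta p \<alpha> n \<epsilon> * qpar p \<alpha> ^ n"
  shows "hlow n p \<alpha> \<epsilon> - hind n p \<alpha> \<epsilon> \<ge> (1 - \<alpha> - \<epsilon>) * (Phi p \<alpha> 1 - Phi p \<alpha> n)"
proof -
  define q where "q = qpar p \<alpha>"
  define ab where "ab = 1 - \<alpha>"
  obtain m where m: "n = Suc m" using n1 by (cases n) auto
  have q: "q = \<alpha> * (1 - p) + (1 - \<alpha>) * p" by (simp add: q_def qpar_def)
  have qpos: "0 < q"
  proof -
    have "0 < (1 - \<alpha>) * p" using hp ha by simp
    moreover have "0 \<le> \<alpha> * (1 - p)" using hp ha by simp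
    ultimately show ?thesis using q by linarith
  qed
  have abpos: "0 < ab" using ha ab_def by simp
  have pr: "0 \<le> p" "p \<le> 1" "0 \<le> \<alpha>" "\<alpha> \<le> 1" "0 < n" using hp ha n1 by auto
  define P where "P = (ab*p)^n"
  define A where "A = (ab*q)^n"
  define B2 where "B2 = (\<alpha>*(1-p))^n"
  define D where "D = P - B2"
  have Ppos: "0 < P" using abpos hp by (simp add: P_def)
  have B2nn: "0 \<le> B2" using ha hp by (simp add: B2_def)
  have Apos: "0 < A" using abpos qpos by (simp add: A_def)
  have AP: "A = (q/p)^n * P" unfolding A_def P_def
    by (simp add: power_mult_distrib[symmetric]) (use hp in \<open>simp add: field_simps\<close>)
  have BP: "B2 = (\<alpha>*(1-p) / ((1-\<alpha>)*p))^n * P" unfolding B2_def P_def ab_def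
    by (simp add: power_mult_distrib[symmetric]) (use hp ha in \<open>simp add: field_simps\<close>)
  have A2: "A \<le> P/2"
  proof -
    have "(q/p)^n * P \<le> 1/2 * P" using r1 Ppos unfolding q_def by (intro mult_right_mono) auto
    then show ?thesis using AP by simp
  qed
  have B22: "B2 \<le> P/2"
  proof -
    have "(\<alpha>*(1-p) / ((1-\<alpha>)*p))^n * P \<le> 1/2 * P" using r2 Ppos by (intro mult_right_mono) auto
    then show ?thesis using BP by simp
  qed
  have Dpos: "0 < D" using A2 B22 Apos D_def by linarith
  define K where "K = A / D"
  have K01: "0 \<le> K" "K \<le> 1" using A2 B22 Apos Dpos unfolding K_def D_def by (auto simp: divide_simps)
  define t where "t = \<epsilon> / ab"
  have t01: "0 \<le> t" "t \<le> 1" using eps e0 hp abpos unfolding t_def ab_def by (auto simp: divide_simps)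
  have Dden: "((1 - \<alpha>) * p) ^ n - (\<alpha> * (1 - p)) ^ n = D" by (simp add: D_def P_def B2_def ab_def)
  have zq: "zeta p \<alpha> n \<epsilon> * qpar p \<alpha> ^ n = (1 - t^n) * K"
  proof -
    have "(1 - t^n) * A = (ab^n - \<epsilon>^n) * q^n"
      using abpos by (simp add: t_def A_def power_divide power_mult_distrib field_simps)
    moreover have "zeta p \<alpha> n \<epsilon> * qpar p \<alpha> ^ n = (ab^n - \<epsilon>^n) * q^n / D"
      unfolding zeta_def Dden by (simp add: q_def ab_def)
    ultimately show ?thesis unfolding K_def using Dpos by simp
  qed
  have phn: "(1 - \<alpha> - \<epsilon>) * Phi p \<alpha> n = (1 - t) * K"
  proof -
    have "(ab - \<epsilon>) * ab^(n-1) = (1 - t) * ab^n"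
      using abpos by (simp add: m t_def field_simps)
    then have "(ab - \<epsilon>) * (q^n * ab^(n-1)) = (1 - t) * A"
    proof -
      assume E: "(ab - \<epsilon>) * ab^(n-1) = (1 - t) * ab^n"
      have "(ab - \<epsilon>) * (q^n * ab^(n-1)) = ((ab - \<epsilon>) * ab^(n-1)) * q^n" by (simp add: mult_ac)
      also have "\<dots> = ((1 - t) * ab^n) * q^n" using E by simp
      also have "\<dots> = (1 - t) * A" by (simp add: A_def power_mult_distrib mult_ac)
      finally show ?thesis .
    qed
    moreover have "(1 - \<alpha> - \<epsilon>) * Phi p \<alpha> n = (ab - \<epsilon>) * (q^n * ab^(n-1)) / D"
      unfolding Phi_def Dden by (simp add: q_def ab_def)
    ultimately show ?thesis unfolding K_def using Dpos by simp
  qed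
  have ph1: "Phi p \<alpha> 1 = q / (p - \<alpha>)"
    by (simp add: Phi_def q_def algebra_simps)
  have hlow_nn: "0 \<le> hlow n p \<alpha> \<epsilon>"
  proof -
    have "pcy1 p \<alpha> Wc \<le> hlow n p \<alpha> \<epsilon>"
      by (rule hlow_ge[OF pr Wc1]) (use Wc2 hp e0 eps in auto)
    moreover have "0 \<le> pcy1 p \<alpha> Wc" using pc_nn[OF pr(1-4) Wc1] by simp
    ultimately show ?thesis by linarith
  qed
  have cv: "(1 - K + K*t)^n \<le> 1 - K + K*t^n" by (rule convex_pow[OF K01 t01])
  have low: "1 - (1 - \<alpha> - \<epsilon>) * Phi p \<alpha> n \<le> hlow n p \<alpha> \<epsilon>"
  proof -
    have "(1 - (1 - \<alpha> - \<epsilon>) * Phi p \<alpha> n) ^ Suc m \<le> hlow n p \<alpha> \<epsilon> ^ Suc m"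
      using cv unfolding phn hl zq m[symmetric] by (simp add: algebra_simps)
    then show ?thesis by (rule power_le_imp_le_base) (rule hlow_nn)
  qed
  have up: "hind n p \<alpha> \<epsilon> \<le> 1 - (1 - \<alpha> - \<epsilon>) * Phi p \<alpha> 1"
  proof (rule hind_le_B[OF pr Wc1])
    show "pcx1 p \<alpha> Wc \<le> \<epsilon>" using Wc2 hp e0 eps by auto
    fix W assume W: "channel W" "pcx1 p \<alpha> W \<le> \<epsilon>"
    have ol: "(p - \<alpha>) * (pcy1 p \<alpha> W - 1) \<le> q * (pcx1 p \<alpha> W - (1 - \<alpha>))"
      unfolding q_def by (rule one_letter) (use hp ha W in auto)
    have "q * (pcx1 p \<alpha> W - (1 - \<alpha>)) \<le> q * (\<epsilon> - (1 - \<alpha>))"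
      using W qpos by (intro mult_left_mono) auto
    with ol have "(1 - \<alpha> - \<epsilon>) * q \<le> (1 - pcy1 p \<alpha> W) * (p - \<alpha>)" by (simp add: algebra_simps)
    then have "(1 - \<alpha> - \<epsilon>) * q / (p - \<alpha>) \<le> 1 - pcy1 p \<alpha> W"
      using hp ha by (simp add: pos_divide_le_eq)
    then show "pcy1 p \<alpha> W \<le> 1 - (1 - \<alpha> - \<epsilon>) * Phi p \<alpha> 1" unfolding ph1 by simp
  qed
  show ?thesis using low up by (simp add: algebra_simps)
qed


lemma max_half: "(v::real) \<le> u \<Longrightarrow> max (u/2) (v/2) + max (v/2) (u/2) = u"
  by (simp add: max_def)

definition Wb :: "real \<Rightarrow> bool \<Rightarrow> bool \<Rightarrow> real" where
  "Wb \<beta> y z = (if y = z then 1 - \<beta> else \<beta>)"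

lemma part2_point:
  fixes \<alpha> \<epsilon> e0 :: real and n :: nat
  assumes ha: "0 \<le> \<alpha>" "\<alpha> < 1/2"
    and n1: "1 \<le> n" and e0: "1/2 \<le> e0" and eps: "e0 \<le> \<epsilon>" "\<epsilon> \<le> 1 - \<alpha>"
    and hl: "hlow n (1/2) \<alpha> \<epsilon> ^ n = 1 - zeta (1/2) \<alpha> n \<epsilon> * qpar (1/2) \<alpha> ^ n"
  shows "hind n (1/2) \<alpha> \<epsilon> \<le> hlow n (1/2) \<alpha> \<epsilon> \<and>
         hlow n (1/2) \<alpha> \<epsilon> \<le> hind n (1/2) \<alpha> \<epsilon> + \<alpha> / (2 * (1 - \<alpha>))"
proof -
  define p :: real where "p = 1/2"
  define ab where "ab = 1 - \<alpha>"
  obtain m where m: "n = Suc m" using n1 by (cases n) auto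
  have pr: "0 \<le> p" "p \<le> 1" "0 \<le> \<alpha>" "\<alpha> \<le> 1" "0 < n" using ha n1 by (auto simp: p_def)
  have abpos: "0 < ab" using ha ab_def by simp
  have wc: "pcx1 p \<alpha> Wc \<le> \<epsilon>" using Wc2[of p \<alpha>] e0 eps by (simp add: p_def)
  have hlow_nn: "0 \<le> hlow n p \<alpha> \<epsilon>"
  proof -
    have "pcy1 p \<alpha> Wc \<le> hlow n p \<alpha> \<epsilon>" by (rule hlow_ge[OF pr Wc1 wc])
    moreover have "0 \<le> pcy1 p \<alpha> Wc" using pc_nn[OF pr(1-4) Wc1] by simp
    ultimately show ?thesis by linarith
  qed
  have c1: "hind n p \<alpha> \<epsilon> \<le> hlow n p \<alpha> \<epsilon>" by (rule hind_le_hlow[OF pr Wc1 wc])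
  define A where "A = ab^n"
  define E where "E = \<epsilon>^n"
  define B where "B = \<alpha>^n"
  have AB: "B < A" unfolding A_def B_def ab_def using ha n1 by (intro power_strict_mono) auto
  have B0: "0 \<le> B" using ha by (simp add: B_def)
  have E0: "0 \<le> E" "E \<le> A" using e0 eps by (auto simp: E_def A_def ab_def intro: power_mono)
  have zq: "zeta p \<alpha> n \<epsilon> * qpar p \<alpha> ^ n = (A - E) / (A - B)"
  proof -
    have q: "qpar p \<alpha> = 1/2" by (simp add: qpar_def p_def field_simps)
    have h: "((1 - \<alpha>) * p) ^ n - (\<alpha> * (1 - p)) ^ n = (A - B) * (1/2)^n"
      by (simp add: p_def A_def B_def ab_def power_mult_distrib power_divide algebra_simps)
    have hp: "(0::real) < (1/2)^n" by simp
    show ?thesis unfolding zeta_def h q using hp by (simp add: A_def E_def ab_def)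
  qed
  have le1: "1 - (A - E) / (A - B) \<le> E / A"
  proof -
    have "E / A - (1 - (A - E) / (A - B)) = B * (A - E) / (A * (A - B))"
      using AB B0 by (simp add: field_simps)
    moreover have "0 \<le> B * (A - E) / (A * (A - B))"
      using AB B0 E0 by (intro divide_nonneg_nonneg mult_nonneg_nonneg) auto
    ultimately show ?thesis by linarith
  qed
  have hup: "hlow n p \<alpha> \<epsilon> \<le> \<epsilon> / ab"
  proof -
    have "hlow n p \<alpha> \<epsilon> ^ Suc m \<le> (\<epsilon> / ab) ^ Suc m"
      using hl le1 unfolding zq p_def[symmetric] m[symmetric] by (simp add: power_divide E_def A_def)
    then show ?thesis by (rule power_le_imp_le_base) (use e0 eps abpos in simp)
  qed
  define \<beta> where "\<beta> = (ab - \<epsilon>) / (1 - 2*\<alpha>)"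
  have b0: "0 \<le> \<beta>" "\<beta> \<le> 1/2" using ha eps e0 unfolding \<beta>_def ab_def by (auto simp: divide_simps)
  have ch: "channel (Wb \<beta>)" using b0 by (auto simp: channel_def Wb_def)
  have e\<beta>: "ab * (1 - \<beta>) + \<alpha> * \<beta> = \<epsilon>"
  proof -
    have nz: "1 - 2*\<alpha> \<noteq> 0" using ha by simp
    have "\<beta> * (1 - 2*\<alpha>) = ab - \<epsilon>" using nz by (simp add: \<beta>_def)
    moreover have "ab * (1 - \<beta>) + \<alpha> * \<beta> = ab - \<beta> * (1 - 2*\<alpha>)" by (simp add: ab_def algebra_simps)
    ultimately show ?thesis by linarith
  qed
  have uv: "\<alpha> * (1 - \<beta>) + ab * \<beta> \<le> ab * (1 - \<beta>) + \<alpha> * \<beta>"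
  proof -
    have "0 \<le> (ab - \<alpha>) * (1 - 2*\<beta>)" using b0 ha ab_def by simp
    then show ?thesis by (simp add: algebra_simps)
  qed
  have px: "pcx1 p \<alpha> (Wb \<beta>) = ab * (1 - \<beta>) + \<alpha> * \<beta>"
  proof -
    have "pcx1 p \<alpha> (Wb \<beta>) = max ((ab * (1 - \<beta>) + \<alpha> * \<beta>)/2) ((\<alpha> * (1 - \<beta>) + ab * \<beta>)/2)
         + max ((\<alpha> * (1 - \<beta>) + ab * \<beta>)/2) ((ab * (1 - \<beta>) + \<alpha> * \<beta>)/2)"
    proof -
      have g: "gX p \<alpha> (Wb \<beta>) True True = (ab * (1 - \<beta>) + \<alpha> * \<beta>)/2"
        "gX p \<alpha> (Wb \<beta>) False True = (\<alpha> * (1 - \<beta>) + ab * \<beta>)/2"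
        "gX p \<alpha> (Wb \<beta>) True False = (\<alpha> * (1 - \<beta>) + ab * \<beta>)/2"
        "gX p \<alpha> (Wb \<beta>) False False = (ab * (1 - \<beta>) + \<alpha> * \<beta>)/2"
        by (simp_all add: gX_def bern_def Wb_def p_def ab_def field_simps)
      show ?thesis unfolding pcx1_def g by (rule refl)
    qed
    also have "\<dots> = ab * (1 - \<beta>) + \<alpha> * \<beta>" by (rule max_half[OF uv])
    finally show ?thesis .
  qed
  have py: "pcy1 p \<alpha> (Wb \<beta>) = 1 - \<beta>"
  proof -
    have "pcy1 p \<alpha> (Wb \<beta>) = max ((1 - \<beta>)/2) (\<beta>/2) + max (\<beta>/2) ((1 - \<beta>)/2)"
    proof -
      have g: "gY p \<alpha> (Wb \<beta>) True True = (1 - \<beta>)/2"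
        "gY p \<alpha> (Wb \<beta>) False True = \<beta>/2"
        "gY p \<alpha> (Wb \<beta>) True False = \<beta>/2"
        "gY p \<alpha> (Wb \<beta>) False False = (1 - \<beta>)/2"
        by (simp_all add: gY_def py1_def bern_def Wb_def p_def field_simps)
      show ?thesis unfolding pcy1_def g by (rule refl)
    qed
    also have "\<dots> = 1 - \<beta>" by (rule max_half) (use b0 in simp)
    finally show ?thesis .
  qed
  have hlo: "1 - \<beta> \<le> hind n p \<alpha> \<epsilon>"
    using hind_ge[OF pr ch] px py e\<beta> by simp
  have ar: "\<epsilon> / ab \<le> 1 - \<beta> + \<alpha> / (2 * ab)"
  proof -
    have "1 - \<beta> + \<alpha> / (2 * ab) - \<epsilon> / ab = \<alpha> * (2*\<epsilon> - 1) / (2 * ab * (1 - 2*\<alpha>))"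
    proof -
      have nz1: "1 - 2*\<alpha> \<noteq> 0" using ha by simp
      have nz2: "ab \<noteq> 0" using abpos by simp
      have "(1 - \<beta> + \<alpha> / (2 * ab) - \<epsilon> / ab) * (2 * ab * (1 - 2*\<alpha>)) = \<alpha> * (2*\<epsilon> - 1)"
        using nz1 nz2 unfolding \<beta>_def by (simp add: field_simps) (simp add: ab_def algebra_simps)
      then show ?thesis using nz1 nz2 by (simp add: eq_divide_eq)
    qed
    moreover have "0 \<le> \<alpha> * (2*\<epsilon> - 1) / (2 * ab * (1 - 2*\<alpha>))"
      using ha abpos e0 eps by (intro divide_nonneg_nonneg mult_nonneg_nonneg) auto
    ultimately show ?thesis by linarith
  qed
  show ?thesis using c1 hup hlo ar unfolding p_def ab_def by linarith
qed


theorem corollary3: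
  fixes p \<alpha> :: real and epsL :: "nat \<Rightarrow> real"
  assumes hp: "1/2 \<le> p" "p < 1"
    and h\<alpha>: "0 \<le> \<alpha>" "\<alpha> < 1/2"
    and hpa: "1 - \<alpha> > p"
    and hL: "\<forall>n\<ge>1. p \<le> epsL n \<and> epsL n < 1 - \<alpha> \<and>
              (\<forall>\<epsilon>\<in>{epsL n..1 - \<alpha>}. hlow n p \<alpha> \<epsilon> ^ n = 1 - zeta p \<alpha> n \<epsilon> * qpar p \<alpha> ^ n)"
  shows "(p > 1/2 \<and> \<alpha> > 0 \<longrightarrow>
            (\<forall>\<^sub>F n in sequentially. \<forall>\<epsilon>\<in>{epsL n..1 - \<alpha>}.
               hlow n p \<alpha> \<epsilon> - hind n p \<alpha> \<epsilon> \<ge> (1 - \<alpha> - \<epsilon>) * (Phi p \<alpha> 1 - Phi p \<alpha> n)))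
       \<and> (p = 1/2 \<longrightarrow>
            (\<forall>n\<ge>1. \<forall>\<epsilon>\<in>{epsL n..1 - \<alpha>}.
               hind n p \<alpha> \<epsilon> \<le> hlow n p \<alpha> \<epsilon> \<and>
               hlow n p \<alpha> \<epsilon> \<le> hind n p \<alpha> \<epsilon> + \<alpha> / (2 * (1 - \<alpha>))))"
proof (intro conjI impI)
  assume h: "p > 1/2 \<and> \<alpha> > 0"
  have q: "qpar p \<alpha> = \<alpha> * (1 - p) + (1 - \<alpha>) * p" by (simp add: qpar_def)
  have qpos: "0 < qpar p \<alpha>"
  proof -
    have "0 < (1 - \<alpha>) * p" using hp h\<alpha> by simp
    moreover have "0 \<le> \<alpha> * (1 - p)" using hp h\<alpha> by simp
    ultimately show ?thesis using q by linarith
  qed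
  have qp: "qpar p \<alpha> < p"
  proof -
    have "qpar p \<alpha> - p = \<alpha> * (1 - 2*p)" using q by (simp add: algebra_simps)
    moreover have "\<alpha> * (1 - 2*p) < 0" using h by (simp add: mult_pos_neg)
    ultimately show ?thesis by linarith
  qed
  have r1: "norm (qpar p \<alpha> / p) < 1" using qpos qp hp by (simp add: divide_simps)
  have r2: "norm (\<alpha>*(1-p) / ((1-\<alpha>)*p)) < 1"
  proof -
    have "\<alpha>*(1-p) < (1-\<alpha>)*p"
    proof -
      have "\<alpha>*(1-p) \<le> \<alpha>*p" using h\<alpha> hp by (intro mult_left_mono) auto
      also have "\<dots> < (1-\<alpha>)*p" using h h\<alpha> by (intro mult_strict_right_mono) auto
      finally show ?thesis .
    qed
    moreover have "0 \<le> \<alpha>*(1-p)" "0 < (1-\<alpha>)*p" using h\<alpha> hp by auto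
    ultimately show ?thesis by (simp add: divide_simps)
  qed
  have e1: "\<forall>\<^sub>F n in sequentially. (qpar p \<alpha> / p)^n < 1/2"
    by (rule order_tendstoD(2)[OF LIMSEQ_power_zero[OF r1]]) simp
  have e2: "\<forall>\<^sub>F n in sequentially. (\<alpha>*(1-p) / ((1-\<alpha>)*p))^n < 1/2"
    by (rule order_tendstoD(2)[OF LIMSEQ_power_zero[OF r2]]) simp
  have e3: "\<forall>\<^sub>F n in sequentially. 1 \<le> n" by (rule eventually_ge_at_top)
  show "\<forall>\<^sub>F n in sequentially. \<forall>\<epsilon>\<in>{epsL n..1 - \<alpha>}.
               hlow n p \<alpha> \<epsilon> - hind n p \<alpha> \<epsilon> \<ge> (1 - \<alpha> - \<epsilon>) * (Phi p \<alpha> 1 - Phi p \<alpha> n)"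
    using e1 e2 e3
  proof eventually_elim
    case (elim n)
    show ?case
    proof
      fix \<epsilon> assume eps: "\<epsilon> \<in> {epsL n..1 - \<alpha>}"
      have hLn: "p \<le> epsL n" "hlow n p \<alpha> \<epsilon> ^ n = 1 - zeta p \<alpha> n \<epsilon> * qpar p \<alpha> ^ n"
        using hL elim(3) eps by auto
      show "hlow n p \<alpha> \<epsilon> - hind n p \<alpha> \<epsilon> \<ge> (1 - \<alpha> - \<epsilon>) * (Phi p \<alpha> 1 - Phi p \<alpha> n)"
        by (rule part1_point[OF _ hp(2) _ h\<alpha>(2) hpa elim(3) _ _ hLn(1) _ _ hLn(2)])
           (use h elim eps in auto)
    qed
  qed
next
  assume p2: "p = 1/2"
  show "\<forall>n\<ge>1. \<forall>\<epsilon>\<in>{epsL n..1 - \<alpha>}.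
               hind n p \<alpha> \<epsilon> \<le> hlow n p \<alpha> \<epsilon> \<and>
               hlow n p \<alpha> \<epsilon> \<le> hind n p \<alpha> \<epsilon> + \<alpha> / (2 * (1 - \<alpha>))"
  proof (intro allI impI ballI)
    fix n :: nat and \<epsilon> assume n1: "1 \<le> n" and eps: "\<epsilon> \<in> {epsL n..1 - \<alpha>}"
    have hLn: "p \<le> epsL n" "hlow n p \<alpha> \<epsilon> ^ n = 1 - zeta p \<alpha> n \<epsilon> * qpar p \<alpha> ^ n"
      using hL n1 eps by auto
    show "hind n p \<alpha> \<epsilon> \<le> hlow n p \<alpha> \<epsilon> \<and>
               hlow n p \<alpha> \<epsilon> \<le> hind n p \<alpha> \<epsilon> + \<alpha> / (2 * (1 - \<alpha>))"
      unfolding p2 by (rule part2_point[OF h\<alpha> n1 _ _ _ hLn(2)[unfolded p2]]) (use hLn(1) eps p2 in auto)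
  qed
qed

end
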